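(* Let $n\ge3$, $k\ge0$, and let $S\subseteq\mathrm{Inc}(A,B)$ be independent in $G_n^k$. If $S$ contains pairs $(a_1,y)$ and $(x,b_{k+2})$ with $a_1\preceq y\prec x\preceq b_{k+2}$, then $|B(a_1,S)|+|A(b_{k+2},S)|\le k+3-n$.
   Context: For integers $n\ge3$, $k\ge0$, the crown $S_n^k$ is the poset with ground set $A\cup B$, $A=\{a_1,\dots,a_{n+k}\}$, $B=\{b_1,\dots,b_{n+k}\}$, indices cyclic modulo $n+k$; elements of $A$ are pairwise incomparable, as are elements of $B$, and $a_i$ is incomparable to $b_j$ when $j\in\{i,\dots,i+k\}$ (mod $n+k$), while $a_i<b_j$ otherwise. $\mathrm{Inc}(A,B)$ is the set of pairs $(a,b)\in A\times B$ with $a$ incomparable to $b$; $G_n^k$ has vertex set $\mathrm{Inc}(A,B)$ with $(a,b)$ adjacent to $(x,y)$ iff $a<y$ and $x<b$. $B(a,S)=\{b:(a,b)\in S\}$, $A(b,S)=\{a:(a,b)\in S\}$. Circle conventions: points $u_1,\dots,u_{n+k}$ lie clockwise on a circle, with $a_i$ and $b_i$ both at $u_i$; a chain $p_1\,R_1\,p_2\cdots p_\ell$ with $R_j\in\{\prec,\preceq\}$ means travelling clockwise from the position of $p_1$ until first reaching the position of $p_\ell$ one meets the positions of $p_2,\dots,p_{\ell-1}$ in order, $\prec$ requiring distinct consecutive positions and $\preceq$ allowing equality. *)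

theory Defs
  imports Main
begin

text \<open>Crown S_n^k with N = n+k. Elements are encoded by their index in {1..N}:
  a pair (i,j) :: nat \<times> nat stands for (a_i, b_j).\<close>

definition crown_N :: "nat \<Rightarrow> nat \<Rightarrow> nat" where
  "crown_N n k = n + k"

definition crown_inc :: "nat \<Rightarrow> nat \<Rightarrow> nat \<Rightarrow> nat \<Rightarrow> bool" where
  "crown_inc n k i j \<longleftrightarrow> 1 \<le> i \<and> i \<le> crown_N n k \<and> 1 \<le> j \<and> j \<le> crown_N n k \<and>
     (j + crown_N n k - i) mod crown_N n k \<le> k"

definition crown_less :: "nat \<Rightarrow> nat \<Rightarrow> nat \<Rightarrow> nat \<Rightarrow> bool" where
  "crown_less n k i j \<longleftrightarrow> 1 \<le> i \<and> i \<le> crown_N n k \<and> 1 \<le> j \<and> j \<le> crown_N n k \<and>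
     \<not> crown_inc n k i j"

definition Inc :: "nat \<Rightarrow> nat \<Rightarrow> (nat \<times> nat) set" where
  "Inc n k = {(i, j). crown_inc n k i j}"

definition G_adj :: "nat \<Rightarrow> nat \<Rightarrow> nat \<times> nat \<Rightarrow> nat \<times> nat \<Rightarrow> bool" where
  "G_adj n k u v \<longleftrightarrow> crown_less n k (fst u) (snd v) \<and> crown_less n k (fst v) (snd u)"

definition G_independent :: "nat \<Rightarrow> nat \<Rightarrow> (nat \<times> nat) set \<Rightarrow> bool" where
  "G_independent n k S \<longleftrightarrow> S \<subseteq> Inc n k \<and> (\<forall>u\<in>S. \<forall>v\<in>S. \<not> G_adj n k u v)"

definition Bset :: "nat \<Rightarrow> (nat \<times> nat) set \<Rightarrow> nat set" where
  "Bset a S = {b. (a, b) \<in> S}"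

definition Aset :: "nat \<Rightarrow> (nat \<times> nat) set \<Rightarrow> nat set" where
  "Aset b S = {a. (a, b) \<in> S}"

definition cw_dist :: "nat \<Rightarrow> nat \<Rightarrow> nat \<Rightarrow> nat" where
  "cw_dist N p q = (q + N - p) mod N"

text \<open>Chain p_1 R_1 p_2 ... p_l of positions: travelling clockwise from p_1 until first
  reaching p_l, one meets p_2, ..., p_{l-1} in order; strict!i = True means R_{i+1} is
  the strict relation (distinct consecutive positions), False means it allows equality.\<close>
definition cw_chain :: "nat \<Rightarrow> nat list \<Rightarrow> bool list \<Rightarrow> bool" where
  "cw_chain N ps strict \<longleftrightarrow> ps \<noteq> [] \<and> length strict = length ps - 1 \<and>
     (\<forall>i < length ps - 1.
        cw_dist N (hd ps) (ps ! i) \<le> cw_dist N (hd ps) (ps ! Suc i) \<and>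
        (strict ! i \<longrightarrow> cw_dist N (hd ps) (ps ! i) < cw_dist N (hd ps) (ps ! Suc i)))"

end

theory Submission
  imports Defs
begin

lemma md:
  assumes "1 \<le> (p::nat)" "p \<le> N" "1 \<le> q" "q \<le> N"
  shows "(p + N - q) mod N = (if q \<le> p then p - q else p + N - q)"
proof (cases "q \<le> p")
  case True
  have e: "p + N - q = (p - q) + N" using True by arith
  have "p - q < N" using True assms by arith
  then show ?thesis using True by (simp only: e mod_add_self2 mod_less) simp
next
  case False
  then have "p + N - q < N" using assms by arith
  then show ?thesis using False by simp
qed

theorem lemma6p6:
  fixes n k x y :: nat and S :: "(nat \<times> nat) set"
  assumes "n \<ge> 3"
    and "G_independent n k S"
    and "(1, y) \<in> S"
    and "(x, k + 2) \<in> S"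
    and "cw_chain (crown_N n k) [1, y, x, k + 2] [False, True, False]"
  shows "int (card (Bset 1 S)) + int (card (Aset (k + 2) S)) \<le> int k + 3 - int n"
proof -
  define N where "N = n + k"
  define B where "B = Bset 1 S"
  define A where "A = Aset (k+2) S"
  have NN: "crown_N n k = N" by (simp add: crown_N_def N_def)
  have SI: "S \<subseteq> Inc n k" and nadj: "\<And>u v. u \<in> S \<Longrightarrow> v \<in> S \<Longrightarrow> \<not> G_adj n k u v"
    using assms(2) by (auto simp: G_independent_def)
  have Bsub: "B \<subseteq> {1..k+1}"
  proof
    fix b assume "b \<in> B"
    then have "(1,b) \<in> S" by (simp add: B_def Bset_def)
    then have i: "crown_inc n k 1 b" using SI by (auto simp: Inc_def)
    then have "1 \<le> b" "b \<le> N" "(b + N - 1) mod N \<le> k" by (auto simp: crown_inc_def NN)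
    then show "b \<in> {1..k+1}" using md[of b N 1] by auto
  qed
  have Asub: "A \<subseteq> {2..k+2}"
  proof
    fix a assume "a \<in> A"
    then have "(a,k+2) \<in> S" by (simp add: A_def Aset_def)
    then have i: "crown_inc n k a (k+2)" using SI by (auto simp: Inc_def)
    then have "1 \<le> a" "a \<le> N" "(k+2 + N - a) mod N \<le> k" "k+2 \<le> N"
      by (auto simp: crown_inc_def NN)
    then show "a \<in> {2..k+2}" using md[of "k+2" N a] by (auto split: if_splits)
  qed
  have cl: "crown_less n k 1 (k+2)"
    using assms(1) md[of "k+2" N 1] by (auto simp: crown_less_def crown_inc_def NN N_def)
  have cross: "n \<le> a - b" if "b \<in> B" "a \<in> A" "b < a" for a b
  proof -
    have "(1,b) \<in> S" "(a,k+2) \<in> S" using that by (auto simp: A_def Aset_def B_def Bset_def)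
    then have "\<not> G_adj n k (1,b) (a,k+2)" using nadj by blast
    then have "\<not> crown_less n k a b" using cl by (simp add: G_adj_def)
    moreover have "1 \<le> a" "a \<le> N" "1 \<le> b" "b \<le> N"
      using that Bsub Asub assms(1) by (auto simp: N_def)
    ultimately have "(b + N - a) mod N \<le> k" by (auto simp: crown_less_def crown_inc_def NN)
    then show ?thesis using md[of b N a] \<open>1 \<le> a\<close> \<open>a \<le> N\<close> \<open>1 \<le> b\<close> \<open>b \<le> N\<close> that(3)
      by (auto simp: N_def)
  qed
  have yB: "y \<in> B" and xA: "x \<in> A" using assms(3,4) by (auto simp: A_def Aset_def B_def Bset_def)
  have "cw_dist N 1 y < cw_dist N 1 x"
    using assms(5) unfolding cw_chain_def NN
    by (auto dest: spec[of _ 1])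
  moreover have "1 \<le> y" "y \<le> N" "1 \<le> x" "x \<le> N"
    using yB xA Bsub Asub assms(1) by (auto simp: N_def)
  ultimately have yx: "y < x" using md[of y N 1] md[of x N 1] by (auto simp: cw_dist_def)
  have fB: "finite B" using Bsub finite_subset by blast
  have fA: "finite A" using Asub finite_subset by blast
  define b1 where "b1 = Max {b\<in>B. b < x}"
  have Bx: "finite {b\<in>B. b < x}" "y \<in> {b\<in>B. b < x}" using fB yB yx by auto
  have "b1 \<in> {b\<in>B. b < x}" unfolding b1_def using Max_in[OF Bx(1)] Bx(2) by blast
  then have b1B: "b1 \<in> B" "b1 < x" by auto
  have b1max: "b \<le> b1" if "b \<in> B" "b < x" for b using Max_ge[OF Bx(1)] that b1_def by auto
  define a1 where "a1 = Min {a\<in>A. b1 < a}"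
  have Ax: "finite {a\<in>A. b1 < a}" "x \<in> {a\<in>A. b1 < a}" using fA xA b1B by auto
  have "a1 \<in> {a\<in>A. b1 < a}" unfolding a1_def using Min_in[OF Ax(1)] Ax(2) by blast
  then have a1A: "a1 \<in> A" "b1 < a1" by auto
  have a1min: "a1 \<le> a" if "a \<in> A" "b1 < a" for a using Min_le[OF Ax(1)] that a1_def by auto
  have a1x: "a1 \<le> x" using a1min xA b1B by auto
  have gap: "n \<le> a1 - b1" using cross[OF b1B(1) a1A(1) a1A(2)] .
  define T where "T = {1..k+1} - {b1+1..a1-2}"
  have "a1 \<le> k+2" using Asub a1A(1) by auto
  then have sub: "{b1+1..a1-2} \<subseteq> {1..k+1}" by auto
  have cT: "card T = k+1 - (a1 - 2 - b1)"
    unfolding T_def using card_Diff_subset[OF _ sub] by simp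
  have BT: "B \<subseteq> T"
  proof
    fix b assume b: "b \<in> B"
    have "\<not> (b1 < b \<and> b < a1)" using b b1max a1x by fastforce
    then show "b \<in> T" using b Bsub unfolding T_def by auto
  qed
  have AT: "(\<lambda>a. a - 1) ` A \<subseteq> T"
  proof
    fix c assume "c \<in> (\<lambda>a. a - 1) ` A"
    then obtain a where a: "a \<in> A" "c = a - 1" by auto
    have "\<not> (b1 < a \<and> a < a1)" using a a1min by fastforce
    moreover have "2 \<le> a" "a \<le> k+2" using a Asub by auto
    ultimately show "c \<in> T" using a unfolding T_def by auto
  qed
  have disj: "B \<inter> (\<lambda>a. a - 1) ` A = {}"
  proof (rule ccontr)
    assume "B \<inter> (\<lambda>a. a - 1) ` A \<noteq> {}"
    then obtain a where a: "a \<in> A" "a - 1 \<in> B" by auto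
    have "a \<ge> 2" using a Asub by auto
    then have "n \<le> a - (a - 1)" using cross[OF a(2) a(1)] by simp
    then show False using assms(1) \<open>a \<ge> 2\<close> by simp
  qed
  have inj: "inj_on (\<lambda>a. a - 1) A"
  proof (rule inj_onI)
    fix u v assume "u \<in> A" "v \<in> A" "u - 1 = v - 1"
    moreover have "2 \<le> u" "2 \<le> v" using \<open>u \<in> A\<close> \<open>v \<in> A\<close> Asub by auto
    ultimately show "u = v" by simp
  qed
  have "card B + card A = card (B \<union> (\<lambda>a. a - 1) ` A)"
    using card_Un_disjoint[OF fB _ disj] fA card_image[OF inj] by simp
  also have "\<dots> \<le> card T"
    using BT AT by (intro card_mono) (auto simp: T_def)
  finally have "card B + card A \<le> k+1 - (a1 - 2 - b1)" using cT by simp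
  then have "card B + card A + n \<le> k + 3" using gap \<open>a1 \<le> k+2\<close> a1A(2) by linarith
  then show ?thesis unfolding A_def B_def by linarith
qed

end
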